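(* Let $T_i$ and $T_j$ be indecomposable summands of a maximal rigid object $T$ of $\mathcal{C}_n$. The following are equivalent: (a) there exists a nonzero $\mathcal{T}$-map $T_i\to T_j$; (b) either $T_j$ lies on the ray $\mathbf{R}_{T_i}$, or $T_i$ lies on the coray $\mathbf{C}_{T_j}$.
   Context: Let $k$ be algebraically closed, $n\ge2$, $\mathcal{T}_n$ the tube of rank $n$ (finite-dimensional nilpotent representations of the cyclically oriented $\tilde A_{n-1}$-quiver; AR-translation $\tau$), $\mathcal{C}_n=D^b(\mathcal{T}_n)/\tau^{-1}[1]$ the cluster tube, with indecomposables identified with those of $\mathcal{T}_n$. Indecomposables have coordinates $(a,b)$, $a\in\mathbb{Z}/n$, $b\ge1$ the quasilength, with $\tau(a,b)=(a-1,b)$ and irreducible maps $(a,b)\to(a,b+1)$ and $(a,b)\to(a+1,b-1)$. The ray $\mathbf{R}_{(a,i)}$ is $\{(a,i+j):j\ge0\}$; the coray $\mathbf{C}_{(a,i)}$ is $\{(a-j,i+j):j\ge0\}$. For indecomposables $X,Y$, $\operatorname{Hom}_{\mathcal{C}_n}(X,Y)=\operatorname{Hom}_{\mathcal{T}_n}(X,Y)\oplus\operatorname{Hom}_{D^b}(X,\tau^{-1}Y[1])$; elements of the first summand are called $\mathcal{T}$-maps. $T$ is maximal rigid if $\operatorname{Ext}^1_{\mathcal{C}_n}(T,T)=0$ and $\operatorname{Ext}^1(T\oplus X,T\oplus X)=0$ implies $X\in\operatorname{add}T$. *)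

theory Defs
  imports Main
begin

text \<open>An indecomposable is a pair (a,b) with a an integer representative of Z/n
  (normalised to 0 <= a < n) and b >= 1 the quasilength.
  The indecomposable (a,b) of the tube is the uniserial module with
  quasi-composition factors S_a (quasi-socle), S_(a+1), ..., S_(a+b-1) (quasi-top),
  so that the irreducible maps (a,b) -> (a,b+1) are monos, (a,b) -> (a+1,b-1) are epis,
  and tau(a,b) = (a-1,b).\<close>

type_synonym ind = "int \<times> nat"

definition valid_ind :: "nat \<Rightarrow> ind \<Rightarrow> bool" where
  "valid_ind n X \<longleftrightarrow> 0 \<le> fst X \<and> fst X < int n \<and> 1 \<le> snd X"

definition tau :: "nat \<Rightarrow> ind \<Rightarrow> ind" where
  "tau n X = ((fst X - 1) mod int n, snd X)"

text \<open>Dimension of Hom in the tube T_n between uniserials X=(a,b) and Y=(c,d):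
  every nonzero map has image which is a quotient of X (factors a+k..a+b-1) and a
  submodule of Y (factors c..c+l-1); such images are in bijection with the
  k in [0,b) with a+k = c (mod n) and b-k <= d, and each contributes one dimension.\<close>

definition hom_T_dim :: "nat \<Rightarrow> ind \<Rightarrow> ind \<Rightarrow> nat" where
  "hom_T_dim n X Y =
     card {k. k < snd X \<and> (fst X + int k) mod int n = fst Y mod int n \<and> snd X - k \<le> snd Y}"

definition nonzero_T_map :: "nat \<Rightarrow> ind \<Rightarrow> ind \<Rightarrow> bool" where
  "nonzero_T_map n X Y \<longleftrightarrow> hom_T_dim n X Y \<noteq> 0"

text \<open>dim Ext^1 in the cluster tube:
  Ext^1_C(X,Y) = Ext^1_T(X,Y) + D Ext^1_T(Y,X) = D Hom_T(Y, tau X) + D Hom_T(X, tau Y).\<close>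
definition ext_C_dim :: "nat \<Rightarrow> ind \<Rightarrow> ind \<Rightarrow> nat" where
  "ext_C_dim n X Y = hom_T_dim n Y (tau n X) + hom_T_dim n X (tau n Y)"

text \<open>A basic object of the cluster tube is represented by its (finite) set of
  indecomposable summands; Ext^1 is additive, so rigidity is checked on pairs.\<close>
definition rigid :: "nat \<Rightarrow> ind set \<Rightarrow> bool" where
  "rigid n S \<longleftrightarrow> finite S \<and> (\<forall>X\<in>S. valid_ind n X) \<and>
     (\<forall>X\<in>S. \<forall>Y\<in>S. ext_C_dim n X Y = 0)"

definition maximal_rigid :: "nat \<Rightarrow> ind set \<Rightarrow> bool" where
  "maximal_rigid n S \<longleftrightarrow> rigid n S \<and>
     (\<forall>X. valid_ind n X \<longrightarrow> rigid n (insert X S) \<longrightarrow> X \<in> S)"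

definition ray :: "nat \<Rightarrow> ind \<Rightarrow> ind set" where
  "ray n X = {((fst X) mod int n, snd X + j) | j. True}"

definition coray :: "nat \<Rightarrow> ind \<Rightarrow> ind set" where
  "coray n X = {((fst X - int j) mod int n, snd X + j) | j. True}"

end

theory Submission
  imports Defs
begin

lemma hom_pos:
  assumes "k < snd X" "(fst X + int k) mod int n = fst Y mod int n" "snd X - k \<le> snd Y"
  shows "hom_T_dim n X Y \<noteq> 0"
proof -
  have fin: "finite {k. k < snd X \<and> (fst X + int k) mod int n = fst Y mod int n \<and> snd X - k \<le> snd Y}"
    by (rule finite_subset[of _ "{..<snd X}"]) auto
  have "k \<in> {k. k < snd X \<and> (fst X + int k) mod int n = fst Y mod int n \<and> snd X - k \<le> snd Y}"
    using assms by auto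
  then show ?thesis using fin unfolding hom_T_dim_def by (metis card_0_eq empty_iff)
qed

theorem lemma2p7:
  fixes n :: nat and T :: "ind set" and Ti Tj :: ind
  assumes "n \<ge> 2"
    and "maximal_rigid n T"
    and "Ti \<in> T" and "Tj \<in> T"
  shows "nonzero_T_map n Ti Tj \<longleftrightarrow> (Tj \<in> ray n Ti \<or> Ti \<in> coray n Tj)"
proof -
  obtain ai bi where Ti: "Ti = (ai, bi)" by force
  obtain aj bj where Tj: "Tj = (aj, bj)" by force
  have rig: "rigid n T" using assms(2) unfolding maximal_rigid_def by blast
  have vi: "0 \<le> ai" "ai < int n" "1 \<le> bi" using rig assms(3) Ti unfolding rigid_def valid_ind_def by auto
  have vj: "0 \<le> aj" "aj < int n" "1 \<le> bj" using rig assms(4) Tj unfolding rigid_def valid_ind_def by auto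
  have ext0: "ext_C_dim n Ti Tj = 0" using rig assms(3,4) unfolding rigid_def by blast
  have aim: "ai mod int n = ai" using vi by simp
  have ajm: "aj mod int n = aj" using vj by simp
  show ?thesis
  proof
    assume "nonzero_T_map n Ti Tj"
    then have "hom_T_dim n Ti Tj \<noteq> 0" unfolding nonzero_T_map_def .
    then obtain k where k: "k < bi" "(ai + int k) mod int n = aj mod int n" "bi - k \<le> bj"
    proof -
      have "card {k. k < bi \<and> (ai + int k) mod int n = aj mod int n \<and> bi - k \<le> bj} \<noteq> 0"
        using \<open>hom_T_dim n Ti Tj \<noteq> 0\<close> unfolding hom_T_dim_def Ti Tj by simp
      then have "{k. k < bi \<and> (ai + int k) mod int n = aj mod int n \<and> bi - k \<le> bj} \<noteq> {}"
        by (metis card.empty)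
      then show ?thesis using that by blast
    qed
    show "Tj \<in> ray n Ti \<or> Ti \<in> coray n Tj"
    proof (cases "k = 0")
      case True
      then have "Tj = (ai mod int n, bi + (bj - bi))" using k Tj aim ajm by auto
      then show ?thesis unfolding ray_def Ti by auto
    next
      case False
      show ?thesis
      proof (cases "bi - k = bj")
        case True
        have "(aj - int k) mod int n = ((ai + int k) mod int n - int k) mod int n"
          using k(2) ajm by simp
        also have "\<dots> = ai" using aim by (simp add: mod_diff_left_eq)
        finally have "Ti = ((aj - int k) mod int n, bj + k)" using True k Ti by auto
        then show ?thesis unfolding coray_def Tj by auto
      next
        case False2: False
        have "hom_T_dim n Ti (tau n Tj) \<noteq> 0"
        proof (rule hom_pos[of "k - 1"])
          show "k - 1 < snd Ti" using k Ti by simp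
          show "snd Ti - (k - 1) \<le> snd (tau n Tj)" using k False False2 Ti Tj by (simp add: tau_def)
          have "(ai + int (k - 1)) mod int n = (ai + int k - 1) mod int n" using False by (simp add: of_nat_diff algebra_simps)
          also have "\<dots> = ((ai + int k) mod int n - 1) mod int n" by (simp add: mod_diff_left_eq)
          also have "\<dots> = (aj - 1) mod int n" using k(2) by (simp add: mod_diff_left_eq)
          finally show "(fst Ti + int (k - 1)) mod int n = fst (tau n Tj) mod int n"
            using Ti Tj by (simp add: tau_def)
        qed
        then show ?thesis using ext0 unfolding ext_C_dim_def by simp
      qed
    qed
  next
    assume "Tj \<in> ray n Ti \<or> Ti \<in> coray n Tj"
    then show "nonzero_T_map n Ti Tj"
    proof
      assume "Tj \<in> ray n Ti"
      then obtain j where j: "aj = ai mod int n" "bj = bi + j" unfolding ray_def Ti Tj by auto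
      show ?thesis unfolding nonzero_T_map_def
        by (rule hom_pos[of 0]) (use j vi ajm Ti Tj in auto)
    next
      assume "Ti \<in> coray n Tj"
      then obtain j where j: "ai = (aj - int j) mod int n" "bi = bj + j" unfolding coray_def Ti Tj by auto
      have "(ai + int j) mod int n = aj mod int n" using j(1) by (simp add: mod_add_left_eq)
      then show ?thesis unfolding nonzero_T_map_def
        by (intro hom_pos[of j]) (use j vj Ti Tj in auto)
    qed
  qed
qed

end
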